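(* Let $K,G:[0,\infty)\to\mathbb{R}$ be continuous, let $f$ solve $f''+Kf=0$ with $f>0$ on $(0,\infty)$ and $\int_1^\infty f(t)^{-2}dt<\infty$, and let $m$ solve $m''+Gm=0$ with $m(0)=f(0)$, $m'(0)=f'(0)$. Suppose the support of $G-K$ is contained in a bounded interval $[a,b]\subset[1,\infty)$. Set $$C(f,a,b):=\Big(\int_a^\infty f(t)^{-2}dt\Big)\cdot\|f^2|_{[a,b]}\|_2>0.$$ If $C(f,a,b)\,\|G-K\|_2<1$, then $$\alpha(m)\le\frac{C(f,a,b)\,\|G-K\|_2}{1-C(f,a,b)\,\|G-K\|_2}.$$
   Context: Notation: $\|G-K\|_2:=\sqrt{\int_0^\infty|G-K|^2dt}$; $\|f^2|_{[a,b]}\|_2:=\sqrt{\int_a^b f(t)^4dt}$; $\sigma(t):=m(t)/f(t)-1$ for $t>0$; $\alpha(m):=\sup_{t>0}|\sigma(t)|$. *)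

theory Defs
  imports "HOL-Analysis.Analysis"
begin

definition L2_diff :: "(real \<Rightarrow> real) \<Rightarrow> (real \<Rightarrow> real) \<Rightarrow> real" where
  "L2_diff G K = sqrt (integral {0..} (\<lambda>t. \<bar>G t - K t\<bar>^2))"

definition L2_sq_restr :: "(real \<Rightarrow> real) \<Rightarrow> real \<Rightarrow> real \<Rightarrow> real" where
  "L2_sq_restr f a b = sqrt (integral {a..b} (\<lambda>t. (f t)^4))"

definition Cfab :: "(real \<Rightarrow> real) \<Rightarrow> real \<Rightarrow> real \<Rightarrow> real" where
  "Cfab f a b = integral {a..} (\<lambda>t. 1 / (f t)^2) * L2_sq_restr f a b"

definition sigma :: "(real \<Rightarrow> real) \<Rightarrow> (real \<Rightarrow> real) \<Rightarrow> real \<Rightarrow> real" where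
  "sigma m f t = m t / f t - 1"

definition alpha :: "(real \<Rightarrow> real) \<Rightarrow> (real \<Rightarrow> real) \<Rightarrow> ereal" where
  "alpha m f = (SUP t\<in>{0<..}. ereal \<bar>sigma m f t\<bar>)"

end

theory Submission
  imports Defs
begin

lemma deriv_at0:
  assumes "(g has_real_derivative d) (at t within {0..})" "t > (0::real)"
  shows "(g has_real_derivative d) (at t)"
  using assms at_within_interior[of t "{0..}"] by simp

lemma quad_disc:
  fixes A X B :: real
  assumes "\<And>x. 0 \<le> A*x^2 + 2*X*x + B"
  shows "X^2 \<le> A*B"
proof (cases "A = 0")
  case True
  show ?thesis
  proof (rule ccontr)
    assume "\<not> ?thesis"
    then have "X \<noteq> 0" using True by simp
    have "0 \<le> A*(-(B+1)/(2*X))^2 + 2*X*(-(B+1)/(2*X)) + B" by (rule assms)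
    also have "\<dots> = -1" using True \<open>X \<noteq> 0\<close> by (simp add: field_simps)
    finally show False by simp
  qed
next
  case False
  have A0: "A \<ge> 0"
  proof (rule ccontr)
    assume "\<not> A \<ge> 0"
    hence An: "A < 0" by simp
    define x where "x = sqrt ((\<bar>B\<bar> + 1) / (- A))"
    have x2: "x^2 = (\<bar>B\<bar> + 1) / (- A)" unfolding x_def using An by (simp add: divide_nonneg_neg)
    have "0 \<le> A*x^2 + 2*X*x + B" by (rule assms)
    moreover have "0 \<le> A*(-x)^2 + 2*X*(-x) + B" by (rule assms)
    ultimately have "0 \<le> A*x^2 + B" by simp
    also have "A*x^2 = -(\<bar>B\<bar> + 1)" using x2 An by simp
    finally show False by simp
  qed
  hence Ap: "A > 0" using False by simp
  have "0 \<le> A*(-X/A)^2 + 2*X*(-X/A) + B" by (rule assms)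
  also have "\<dots> = B - X^2/A" using Ap by (simp add: field_simps power2_eq_square)
  finally have "X^2/A \<le> B" by simp
  thus ?thesis using Ap by (simp add: field_simps)
qed

lemma cs_int:
  fixes p q :: "real \<Rightarrow> real"
  assumes cd: "c \<le> d" and cp: "continuous_on {c..d} p" and cq: "continuous_on {c..d} q"
  shows "integral {c..d} (\<lambda>t. p t * q t)
     \<le> sqrt (integral {c..d} (\<lambda>t. (p t)^2)) * sqrt (integral {c..d} (\<lambda>t. (q t)^2))"
proof -
  define A where "A = integral {c..d} (\<lambda>t. (p t)^2)"
  define B where "B = integral {c..d} (\<lambda>t. (q t)^2)"
  define X where "X = integral {c..d} (\<lambda>t. p t * q t)"
  have ip: "(\<lambda>t. (p t)^2) integrable_on {c..d}"
    by (intro integrable_continuous_interval continuous_intros cp)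
  have iq: "(\<lambda>t. (q t)^2) integrable_on {c..d}"
    by (intro integrable_continuous_interval continuous_intros cq)
  have ipq: "(\<lambda>t. p t * q t) integrable_on {c..d}"
    by (intro integrable_continuous_interval continuous_intros cp cq)
  have "0 \<le> A*x^2 + 2*X*x + B" for x
  proof -
    have "(\<lambda>t. (x * p t + q t)^2) = (\<lambda>t. x^2 * (p t)^2 + (2*x) * (p t * q t) + (q t)^2)"
      by (rule ext) (simp add: power2_eq_square algebra_simps)
    moreover have i1: "(\<lambda>t. x^2 * (p t)^2) integrable_on {c..d}" by (intro integrable_continuous_interval continuous_intros cp cq)
    moreover have i2: "(\<lambda>t. (2*x) * (p t * q t)) integrable_on {c..d}" by (intro integrable_continuous_interval continuous_intros cp cq)
    moreover have "integral {c..d} (\<lambda>t. x^2 * (p t)^2 + (2*x) * (p t * q t) + (q t)^2)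
        = integral {c..d} (\<lambda>t. x^2 * (p t)^2 + (2*x) * (p t * q t)) + integral {c..d} (\<lambda>t. (q t)^2)"
      by (rule integral_add[OF integrable_add[OF i1 i2] iq])
    moreover have "integral {c..d} (\<lambda>t. x^2 * (p t)^2 + (2*x) * (p t * q t))
        = integral {c..d} (\<lambda>t. x^2 * (p t)^2) + integral {c..d} (\<lambda>t. (2*x) * (p t * q t))"
      by (rule integral_add[OF i1 i2])
    ultimately have "integral {c..d} (\<lambda>t. (x * p t + q t)^2) = x^2 * A + (2*x) * X + B"
      unfolding A_def B_def X_def by simp
    moreover have "0 \<le> integral {c..d} (\<lambda>t. (x * p t + q t)^2)"
      by (intro integral_nonneg integrable_continuous_interval continuous_intros cp cq) auto
    ultimately show ?thesis by (simp add: algebra_simps)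
  qed
  hence "X^2 \<le> A*B" by (rule quad_disc)
  hence "\<bar>X\<bar> \<le> sqrt (A*B)" using real_sqrt_le_mono[of "X^2" "A*B"] by simp
  hence "X \<le> sqrt (A*B)" by simp
  thus ?thesis unfolding A_def B_def X_def by (simp add: real_sqrt_mult)
qed

lemma zero_sol:
  fixes y z w K :: "real \<Rightarrow> real"
  assumes a0: "0 \<le> a" and cK: "continuous_on {0..a} K"
    and dy: "\<And>t. t \<in> {0..a} \<Longrightarrow> (y has_real_derivative z t) (at t within {0..a})"
    and dz: "\<And>t. t \<in> {0..a} \<Longrightarrow> (z has_real_derivative w t) (at t within {0..a})"
    and wK: "\<And>t. 0 \<le> t \<Longrightarrow> t < a \<Longrightarrow> w t = - K t * y t"
    and y0: "y 0 = 0" and z0: "z 0 = 0"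
    and t: "t \<in> {0..a}"
  shows "y t = 0 \<and> z t = 0"
proof -
  have "bounded (K ` {0..a})"
    by (intro compact_imp_bounded compact_continuous_image cK) simp
  then obtain B where B0: "\<forall>s\<in>{0..a}. \<bar>K s\<bar> \<le> B"
    unfolding bounded_iff by auto
  hence B: "\<And>s. s \<in> {0..a} \<Longrightarrow> \<bar>K s\<bar> \<le> B" by blast
  define L where "L = 1 + \<bar>B\<bar>"
  define \<phi> where "\<phi> s = ((y s)^2 + (z s)^2) * exp (- L * s)" for s
  have cy: "continuous_on {0..a} y" using dy by (rule DERIV_continuous_on)
  have cz: "continuous_on {0..a} z" using dz by (rule DERIV_continuous_on)
  have cphi: "continuous_on {0..t} \<phi>"
    unfolding \<phi>_def
    by (intro continuous_intros continuous_on_subset[OF cy] continuous_on_subset[OF cz])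
       (use t in auto)
  have "\<phi> t \<le> \<phi> 0"
  proof (rule DERIV_nonpos_imp_decreasing_open[OF _ _ cphi])
    show "0 \<le> t" using t by simp
    fix s assume s: "0 < s" "s < t"
    have sin: "s \<in> interior {0..a}" using s t by simp
    have dy': "(y has_real_derivative z s) (at s)"
      using dy[of s] s t at_within_interior[OF sin] by simp
    have dz': "(z has_real_derivative w s) (at s)"
      using dz[of s] s t at_within_interior[OF sin] by simp
    have D: "(\<phi> has_real_derivative
       ((2 * y s * z s + 2 * z s * w s) - L * ((y s)^2 + (z s)^2)) * exp (- L * s)) (at s)"
      unfolding \<phi>_def
      by (rule derivative_eq_intros dy' dz' refl | simp add: algebra_simps)+
    have ws: "w s = - K s * y s" using wK[of s] s t by simp
    have Ks: "\<bar>K s\<bar> \<le> B" using B[of s] s t by simp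
    have "2 * y s * z s + 2 * z s * w s = 2 * (y s * z s) * (1 - K s)" using ws
      by (simp add: algebra_simps)
    also have "\<dots> \<le> \<bar>2 * (y s * z s)\<bar> * \<bar>1 - K s\<bar>"
      by (metis abs_ge_self abs_mult)
    also have "\<dots> \<le> ((y s)^2 + (z s)^2) * L"
    proof (rule mult_mono)
      have "0 \<le> (\<bar>y s\<bar> - \<bar>z s\<bar>)^2" by simp
      thus "\<bar>2 * (y s * z s)\<bar> \<le> (y s)^2 + (z s)^2"
        by (simp add: power2_diff abs_mult power2_abs)
      show "\<bar>1 - K s\<bar> \<le> L" using Ks unfolding L_def by linarith
    qed auto
    finally have "(2 * y s * z s + 2 * z s * w s) - L * ((y s)^2 + (z s)^2) \<le> 0"
      by (simp add: algebra_simps)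
    hence "((2 * y s * z s + 2 * z s * w s) - L * ((y s)^2 + (z s)^2)) * exp (- L * s) \<le> 0"
      by (simp add: mult_nonpos_nonneg)
    thus "\<exists>d. (\<phi> has_real_derivative d) (at s) \<and> d \<le> 0" using D by blast
  qed
  hence "\<phi> t \<le> 0" unfolding \<phi>_def using y0 z0 by simp
  hence "(y t)^2 + (z t)^2 \<le> 0" unfolding \<phi>_def
    by (simp add: mult_le_0_iff)
  thus ?thesis by (simp add: sum_power2_le_zero_iff)
qed

theorem lemma2p3:
  fixes K G f f' m m' :: "real \<Rightarrow> real" and a b :: real
  assumes contK: "continuous_on {0..} K"
    and contG: "continuous_on {0..} G"
    and f_d1: "\<And>t. t \<ge> 0 \<Longrightarrow> (f has_real_derivative f' t) (at t within {0..})"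
    and f_d2: "\<And>t. t \<ge> 0 \<Longrightarrow> (f' has_real_derivative (- K t * f t)) (at t within {0..})"
    and f_pos: "\<And>t. t > 0 \<Longrightarrow> f t > 0"
    and f_int: "(\<lambda>t. 1 / (f t)^2) integrable_on {1..}"
    and m_d1: "\<And>t. t \<ge> 0 \<Longrightarrow> (m has_real_derivative m' t) (at t within {0..})"
    and m_d2: "\<And>t. t \<ge> 0 \<Longrightarrow> (m' has_real_derivative (- G t * m t)) (at t within {0..})"
    and m0: "m 0 = f 0" and m'0: "m' 0 = f' 0"
    and ab: "1 \<le> a" "a \<le> b"
    and supp: "closure {t \<in> {0..}. G t \<noteq> K t} \<subseteq> {a..b}"
    and small: "Cfab f a b * L2_diff G K < 1"
  shows "alpha m f \<le> ereal (Cfab f a b * L2_diff G K / (1 - Cfab f a b * L2_diff G K))"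
proof -
  define D where "D = L2_diff G K"
  define L4 where "L4 = L2_sq_restr f a b"
  define I where "I = integral {a..} (\<lambda>t. 1 / (f t)^2)"
  define CD where "CD = Cfab f a b * L2_diff G K"
  have CD_eq: "CD = I * L4 * D" unfolding CD_def Cfab_def I_def L4_def D_def by simp
  have a0: "0 < a" using ab by simp
  have cf: "continuous_on {0..} f" using f_d1 by (auto intro!: DERIV_continuous_on)
  have cf': "continuous_on {0..} f'" using f_d2 by (auto intro!: DERIV_continuous_on)
  have cm: "continuous_on {0..} m" using m_d1 by (auto intro!: DERIV_continuous_on)
  have cm': "continuous_on {0..} m'" using m_d2 by (auto intro!: DERIV_continuous_on)
  have GK: "G t = K t" if "0 \<le> t" "t \<notin> {a..b}" for t
  proof (rule ccontr)
    assume "G t \<noteq> K t"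
    hence "t \<in> {t \<in> {0..}. G t \<noteq> K t}" using that by simp
    hence "t \<in> closure {t \<in> {0..}. G t \<noteq> K t}" using closure_subset by (rule subsetD[rotated])
    hence "t \<in> {a..b}" using supp by (rule subsetD[rotated])
    thus False using that by simp
  qed
  have eq_a: "m t = f t \<and> m' t = f' t" if t: "t \<in> {0..a}" for t
  proof -
    have "(\<lambda>t. m t - f t) t = 0 \<and> (\<lambda>t. m' t - f' t) t = 0"
    proof (rule zero_sol[where K=K and w="\<lambda>t. - G t * m t - (- K t * f t)"
          and y="\<lambda>t. m t - f t" and z="\<lambda>t. m' t - f' t"])
      show "0 \<le> a" using a0 by simp
      show "continuous_on {0..a} K" by (rule continuous_on_subset[OF contK]) auto
      show "((\<lambda>t. m t - f t) has_real_derivative m' s - f' s) (at s within {0..a})"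
        if "s \<in> {0..a}" for s
        using that by (intro DERIV_diff has_field_derivative_subset[OF m_d1] has_field_derivative_subset[OF f_d1]) auto
      show "((\<lambda>t. m' t - f' t) has_real_derivative - G s * m s - (- K s * f s)) (at s within {0..a})"
        if "s \<in> {0..a}" for s
        using that by (intro DERIV_diff has_field_derivative_subset[OF m_d2] has_field_derivative_subset[OF f_d2]) auto
      show "- G s * m s - (- K s * f s) = - K s * (m s - f s)" if "0 \<le> s" "s < a" for s
        using GK[of s] that by (simp add: algebra_simps)
    qed (use m0 m'0 t in auto)
    thus ?thesis by simp
  qed
  define W where "W t = m' t * f t - m t * f' t" for t
  have dW: "(W has_real_derivative (-(G t - K t) * f t * m t)) (at t within {0..})" if t: "t \<ge> 0" for t
    unfolding W_def
    by (rule derivative_eq_intros m_d1[OF t] m_d2[OF t] f_d1[OF t] f_d2[OF t] refl | simp add: algebra_simps)+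
  have cW: "continuous_on {0..} W" using dW by (auto intro!: DERIV_continuous_on)
  have Wa: "W a = 0" using eq_a[of a] a0 unfolding W_def by simp
  have Wint: "W s = integral {a..s} (\<lambda>t. -(G t - K t) * f t * m t)" if s: "a \<le> s" for s
  proof -
    have "((\<lambda>t. -(G t - K t) * f t * m t) has_integral (W s - W a)) {a..s}"
    proof (rule fundamental_theorem_of_calculus[OF s])
      fix x assume x: "x \<in> {a..s}"
      show "(W has_vector_derivative -(G x - K x) * f x * m x) (at x within {a..s})"
        unfolding has_real_derivative_iff_has_vector_derivative[symmetric]
        by (rule has_field_derivative_subset[OF dW]) (use x a0 in auto)
    qed
    thus ?thesis using Wa by (simp add: integral_unique)
  qed
  have Wconst: "W s = W b" if s: "b \<le> s" for s
  proof -
    have cWs: "continuous_on {b..s} W" by (rule continuous_on_subset[OF cW]) (use ab in auto)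
    have d0: "(W has_real_derivative 0) (at x)" if "b < x" "x < s" for x
    proof -
      have "(W has_real_derivative (-(G x - K x) * f x * m x)) (at x)"
        by (rule deriv_at0[OF dW]) (use that ab in auto)
      moreover have "G x = K x" using GK[of x] that ab by auto
      ultimately show ?thesis by simp
    qed
    have "W b \<le> W s" by (rule DERIV_nonneg_imp_increasing_open[OF s _ cWs]) (use d0 in auto)
    moreover have "W s \<le> W b" by (rule DERIV_nonpos_imp_decreasing_open[OF s _ cWs]) (use d0 in auto)
    ultimately show ?thesis by simp
  qed
  have dsig: "((\<lambda>t. m t / f t - 1) has_real_derivative W t / (f t)^2) (at t within {0..})" if t: "t > 0" for t
  proof -
    have "t \<ge> 0" "f t \<noteq> 0" using t f_pos[OF t] by auto
    hence "((\<lambda>t. m t / f t - 1) has_real_derivative ((m' t * f t - m t * f' t) / (f t * f t) - 0)) (at t within {0..})"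
      by (intro DERIV_diff DERIV_divide m_d1 f_d1 DERIV_const) auto
    thus ?thesis by (rule DERIV_cong) (simp add: W_def power2_eq_square)
  qed
  have sigint: "sigma m f t = integral {a..t} (\<lambda>s. W s / (f s)^2)" if t: "a \<le> t" for t
  proof -
    have "((\<lambda>s. W s / (f s)^2) has_integral (sigma m f t - sigma m f a)) {a..t}"
      unfolding sigma_def
    proof (rule fundamental_theorem_of_calculus[OF t])
      fix x assume x: "x \<in> {a..t}"
      show "((\<lambda>t. m t / f t - 1) has_vector_derivative W x / (f x)^2) (at x within {a..t})"
        unfolding has_real_derivative_iff_has_vector_derivative[symmetric]
        by (rule has_field_derivative_subset[OF dsig]) (use x a0 in auto)
    qed
    moreover have "sigma m f a = 0" using eq_a[of a] a0 f_pos[OF a0] unfolding sigma_def by simp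
    ultimately show ?thesis by (simp add: integral_unique)
  qed
  have cGK: "continuous_on {a..b} (\<lambda>t. \<bar>G t - K t\<bar>^2)"
    by (intro continuous_intros continuous_on_subset[OF contG] continuous_on_subset[OF contK]) (use a0 in auto)
  have Dint: "integral {0..} (\<lambda>t. \<bar>G t - K t\<bar>^2) = integral {a..b} (\<lambda>t. \<bar>G t - K t\<bar>^2)"
  proof -
    define J where "J = integral {a..b} (\<lambda>t. \<bar>G t - K t\<bar>^2)"
    define g where "g t = (if t \<in> {a..b} then \<bar>G t - K t\<bar>^2 else 0)" for t
    have "((\<lambda>t. \<bar>G t - K t\<bar>^2) has_integral J) {a..b}"
      unfolding J_def by (intro integrable_integral integrable_continuous_interval cGK)
    hence "(g has_integral J) {a..b}" by (subst has_integral_cong[where g="\<lambda>t. \<bar>G t - K t\<bar>^2"]) (auto simp: g_def)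
    hence "(g has_integral J) {0..}" by (rule has_integral_on_superset) (use a0 in \<open>auto simp: g_def\<close>)
    hence "((\<lambda>t. \<bar>G t - K t\<bar>^2) has_integral J) {0..}"
      by (subst has_integral_cong[where g=g]) (auto simp: g_def GK)
    thus ?thesis unfolding J_def by (rule integral_unique)
  qed
  have D0: "D \<ge> 0" unfolding D_def L2_diff_def Dint
    by (intro real_sqrt_ge_zero integral_nonneg integrable_continuous_interval cGK) auto
  have L40: "L4 \<ge> 0" unfolding L4_def L2_sq_restr_def
    by (intro real_sqrt_ge_zero integral_nonneg integrable_continuous_interval continuous_intros continuous_on_subset[OF cf])
       (use a0 in auto)
  have fint_a: "(\<lambda>t. 1 / (f t)^2) integrable_on {a..}"
  proof -
    have "(\<lambda>t. 1 / (f t)^2) absolutely_integrable_on {1..}"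
      by (rule nonnegative_absolutely_integrable_1[OF f_int]) simp
    hence "(\<lambda>t. 1 / (f t)^2) absolutely_integrable_on {a..}"
      by (rule set_integrable_subset) (use ab in auto)
    thus ?thesis using set_lebesgue_integral_eq_integral(1) by blast
  qed
  have I0: "I \<ge> 0" unfolding I_def by (rule integral_nonneg[OF fint_a]) simp
  have CD0: "CD \<ge> 0" using CD_eq I0 L40 D0 by simp
  have CD1: "CD < 1" using small CD_def by simp
  have key: "\<bar>sigma m f t\<bar> \<le> CD / (1 - CD)" if T: "a \<le> T" and t: "t \<in> {a..T}" for T t
  proof -
    have fpos: "f s > 0" if "s \<in> {a..T}" for s using that a0 f_pos by auto
    have csig: "continuous_on {a..T} (\<lambda>t. \<bar>sigma m f t\<bar>)"
      unfolding sigma_def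
      by (intro continuous_intros continuous_on_subset[OF cm] continuous_on_subset[OF cf])
         (use a0 fpos in \<open>auto simp: less_imp_neq[symmetric]\<close>)
    obtain t0 where t0: "t0 \<in> {a..T}" and mx: "\<And>s. s \<in> {a..T} \<Longrightarrow> \<bar>sigma m f s\<bar> \<le> \<bar>sigma m f t0\<bar>"
      using continuous_attains_sup[OF _ _ csig] T by auto
    define S where "S = \<bar>sigma m f t0\<bar>"
    have S0: "S \<ge> 0" unfolding S_def by simp
    have Wb: "\<bar>W s\<bar> \<le> (1+S) * (D * L4)" if s: "s \<in> {a..T}" for s
    proof -
      define s' where "s' = min s b"
      have s'1: "a \<le> s'" "s' \<le> b" "s' \<le> T" using s ab unfolding s'_def by auto
      have "W s = W s'" unfolding s'_def using Wconst[of s] by (cases "s \<le> b") auto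
      also have "\<dots> = integral {a..s'} (\<lambda>t. -(G t - K t) * f t * m t)" by (rule Wint[OF s'1(1)])
      finally have Ws: "W s = integral {a..s'} (\<lambda>t. -(G t - K t) * f t * m t)" .
      have sub: "{a..s'} \<subseteq> {a..T}" using s'1 by auto
      have sub0: "{a..s'} \<subseteq> {0..}" using s'1 a0 by auto
      have cG': "continuous_on {a..s'} G" by (rule continuous_on_subset[OF contG sub0])
      have cK': "continuous_on {a..s'} K" by (rule continuous_on_subset[OF contK sub0])
      have cf'': "continuous_on {a..s'} f" by (rule continuous_on_subset[OF cf sub0])
      have cm'': "continuous_on {a..s'} m" by (rule continuous_on_subset[OF cm sub0])
      have "norm (integral {a..s'} (\<lambda>t. -(G t - K t) * f t * m t)) \<le> integral {a..s'} (\<lambda>t. (1+S) * (\<bar>G t - K t\<bar> * (f t)^2))"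
      proof (rule integral_norm_bound_integral)
        show "(\<lambda>t. -(G t - K t) * f t * m t) integrable_on {a..s'}"
          by (intro integrable_continuous_interval continuous_intros cG' cK' cf'' cm'')
        show "(\<lambda>t. (1+S) * (\<bar>G t - K t\<bar> * (f t)^2)) integrable_on {a..s'}"
          by (intro integrable_continuous_interval continuous_intros cG' cK' cf'')
        fix x assume x: "x \<in> {a..s'}"
        have fx: "f x > 0" using fpos x sub by auto
        have mx': "m x = f x * (1 + sigma m f x)" unfolding sigma_def using fx by (simp add: field_simps)
        have "\<bar>1 + sigma m f x\<bar> \<le> 1 + S" using mx[of x] x sub unfolding S_def by auto
        hence "\<bar>G x - K x\<bar> * (f x * f x) * \<bar>1 + sigma m f x\<bar> \<le> \<bar>G x - K x\<bar> * (f x * f x) * (1 + S)"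
          by (intro mult_left_mono) auto
        moreover have "norm (-(G x - K x) * f x * m x) = \<bar>G x - K x\<bar> * (f x * f x) * \<bar>1 + sigma m f x\<bar>"
          unfolding mx' real_norm_def using fx by (simp add: abs_mult mult_ac abs_minus_commute)
        moreover have "(1+S) * (\<bar>G x - K x\<bar> * (f x)^2) = \<bar>G x - K x\<bar> * (f x * f x) * (1 + S)"
          by (simp add: power2_eq_square mult_ac)
        ultimately show "norm (-(G x - K x) * f x * m x) \<le> (1+S) * (\<bar>G x - K x\<bar> * (f x)^2)"
          by linarith
      qed
      hence "\<bar>W s\<bar> \<le> integral {a..s'} (\<lambda>t. (1+S) * (\<bar>G t - K t\<bar> * (f t)^2))"
        using Ws by simp
      also have "\<dots> = (1+S) * integral {a..s'} (\<lambda>t. \<bar>G t - K t\<bar> * (f t)^2)"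
        by (rule integral_mult_right)
      also have "\<dots> \<le> (1+S) * (D * L4)"
      proof (rule mult_left_mono)
        show "0 \<le> 1 + S" using S0 by simp
        have "integral {a..s'} (\<lambda>t. \<bar>G t - K t\<bar> * (f t)^2)
           \<le> sqrt (integral {a..s'} (\<lambda>t. (\<bar>G t - K t\<bar>)^2)) * sqrt (integral {a..s'} (\<lambda>t. ((f t)^2)^2))"
          by (rule cs_int[OF s'1(1)]) (intro continuous_intros cG' cK' cf'')+
        also have "\<dots> \<le> D * L4"
        proof (rule mult_mono)
          have "integral {a..s'} (\<lambda>t. (\<bar>G t - K t\<bar>)^2) \<le> integral {a..b} (\<lambda>t. \<bar>G t - K t\<bar>^2)"
          proof (rule integral_subset_le)
            show "{a..s'} \<subseteq> {a..b}" using s'1 by auto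
            show "(\<lambda>t. \<bar>G t - K t\<bar>^2) integrable_on {a..s'}"
              by (rule integrable_continuous_interval, rule continuous_on_subset[OF cGK]) (use s'1 in auto)
            show "(\<lambda>t. \<bar>G t - K t\<bar>^2) integrable_on {a..b}"
              by (rule integrable_continuous_interval, rule cGK)
          qed simp
          thus "sqrt (integral {a..s'} (\<lambda>t. (\<bar>G t - K t\<bar>)^2)) \<le> D"
            unfolding D_def L2_diff_def Dint by simp
          have cf4: "continuous_on {a..b} (\<lambda>t. ((f t)^2)^2)"
            by (intro continuous_intros continuous_on_subset[OF cf]) (use a0 in auto)
          have "integral {a..s'} (\<lambda>t. ((f t)^2)^2) \<le> integral {a..b} (\<lambda>t. ((f t)^2)^2)"
          proof (rule integral_subset_le)
            show "{a..s'} \<subseteq> {a..b}" using s'1 by auto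
            show "(\<lambda>t. ((f t)^2)^2) integrable_on {a..s'}"
              by (rule integrable_continuous_interval, rule continuous_on_subset[OF cf4]) (use s'1 in auto)
            show "(\<lambda>t. ((f t)^2)^2) integrable_on {a..b}"
              by (rule integrable_continuous_interval, rule cf4)
          qed simp
          moreover have "(\<lambda>t. ((f t)^2)^2) = (\<lambda>t. (f t)^4)" by (rule ext) simp
          ultimately show "sqrt (integral {a..s'} (\<lambda>t. ((f t)^2)^2)) \<le> L4"
            unfolding L4_def L2_sq_restr_def by simp
          have "0 \<le> integral {a..s'} (\<lambda>t. ((f t)^2)^2)"
            by (rule integral_nonneg, rule integrable_continuous_interval, rule continuous_on_subset[OF cf4]) (use s'1 in auto)
          thus "0 \<le> sqrt (integral {a..s'} (\<lambda>t. ((f t)^2)^2))" by simp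
        qed (use D0 in auto)
        finally show "integral {a..s'} (\<lambda>t. \<bar>G t - K t\<bar> * (f t)^2) \<le> D * L4" .
      qed
      finally show ?thesis .
    qed
    define M where "M = (1+S) * (D * L4)"
    have M0: "M \<ge> 0" unfolding M_def using S0 D0 L40 by simp
    have sb: "\<bar>sigma m f u\<bar> \<le> M * I" if u: "u \<in> {a..T}" for u
    proof -
      have sub: "{a..u} \<subseteq> {a..T}" using u by auto
      have sub0: "{a..u} \<subseteq> {0..}" using u a0 by auto
      have cf'': "continuous_on {a..u} f" by (rule continuous_on_subset[OF cf sub0])
      have fnz: "\<And>x. x \<in> {a..u} \<Longrightarrow> f x \<noteq> 0" using fpos sub by (metis less_irrefl subsetD)
      have "norm (integral {a..u} (\<lambda>s. W s / (f s)^2)) \<le> integral {a..u} (\<lambda>x. M * (1 / (f x)^2))"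
      proof (rule integral_norm_bound_integral)
        show "(\<lambda>x. W x / (f x)^2) integrable_on {a..u}"
          by (intro integrable_continuous_interval continuous_intros continuous_on_subset[OF cW sub0] cf'')
             (use fnz in auto)
        show "(\<lambda>x. M * (1 / (f x)^2)) integrable_on {a..u}"
          by (intro integrable_continuous_interval continuous_intros cf'') (use fnz in auto)
        fix x assume x: "x \<in> {a..u}"
        have "\<bar>W x\<bar> \<le> M" using Wb[of x] x sub unfolding M_def by auto
        thus "norm (W x / (f x)^2) \<le> M * (1 / (f x)^2)"
          by (simp add: abs_div divide_right_mono)
      qed
      hence "\<bar>sigma m f u\<bar> \<le> integral {a..u} (\<lambda>x. M * (1 / (f x)^2))"
        using sigint[of u] u by simp
      also have "\<dots> = M * integral {a..u} (\<lambda>x. 1 / (f x)^2)" by (rule integral_mult_right)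
      also have "\<dots> \<le> M * I"
      proof (rule mult_left_mono[OF _ M0])
        show "integral {a..u} (\<lambda>x. 1 / (f x)^2) \<le> I"
          unfolding I_def
          by (rule integral_subset_le) (use fnz fint_a in \<open>auto intro!: integrable_continuous_interval continuous_intros cf''\<close>)
      qed
      finally show ?thesis .
    qed
    have "S \<le> M * I" unfolding S_def by (rule sb[OF t0])
    also have "M * I = (1+S) * CD" unfolding M_def CD_eq by (simp add: algebra_simps)
    finally have "S * (1 - CD) \<le> CD" by (simp add: algebra_simps)
    hence "S \<le> CD / (1 - CD)" using CD1 by (simp add: field_simps)
    moreover have "\<bar>sigma m f t\<bar> \<le> S" unfolding S_def by (rule mx[OF t])
    ultimately show ?thesis by simp
  qed
  have "\<bar>sigma m f t\<bar> \<le> CD / (1 - CD)" if t: "t > 0" for t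
  proof (cases "t \<le> a")
    case True
    have "sigma m f t = 0" using eq_a[of t] t True f_pos[OF t] unfolding sigma_def by simp
    thus ?thesis using CD0 CD1 by simp
  next
    case False
    thus ?thesis using key[of t t] by simp
  qed
  thus ?thesis unfolding alpha_def CD_def[symmetric]
    by (intro SUP_least) auto
qed

end
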